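(* Let $n\geq 5$, let $S$ be the set of all $3$-cycles in $S_n$, and let $CAG_n=\mathrm{Cay}(A_n,S)$. Let $G_e$ be the set of automorphisms of $CAG_n$ fixing the identity vertex $e$. Let $g\in G_e$ and $\alpha,\beta\in S$ (not necessarily distinct). If $\alpha^g=\beta$, then $(\alpha^{-1})^g=\beta^{-1}$.
   Context: For a finite group $\Gamma$ and a subset $T\subseteq\Gamma$ with $e\notin T$ and $T=T^{-1}$, the Cayley graph $\mathrm{Cay}(\Gamma,T)$ is the undirected graph with vertex set $\Gamma$ and edge set $\{\{\gamma,t\gamma\}\mid \gamma\in\Gamma, t\in T\}$. $x^g$ denotes the image of the vertex $x$ under the automorphism $g$. *)

theory Defs
  imports "HOL-Combinatorics.Permutations"
begin

definition sym_grp :: "nat \<Rightarrow> (nat \<Rightarrow> nat) set" where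
  "sym_grp n = {p. p permutes {1..n}}"

definition alt_grp :: "nat \<Rightarrow> (nat \<Rightarrow> nat) set" where
  "alt_grp n = {p. p permutes {1..n} \<and> evenperm p}"

definition three_cycle :: "nat \<Rightarrow> nat \<Rightarrow> nat \<Rightarrow> nat \<Rightarrow> nat" where
  "three_cycle a b c = (\<lambda>x. if x = a then b else if x = b then c else if x = c then a else x)"

definition three_cycles :: "nat \<Rightarrow> (nat \<Rightarrow> nat) set" where
  "three_cycles n = {three_cycle a b c | a b c.
      a \<in> {1..n} \<and> b \<in> {1..n} \<and> c \<in> {1..n} \<and> a \<noteq> b \<and> b \<noteq> c \<and> a \<noteq> c}"

definition cay_adj :: "('a \<Rightarrow> 'a) set \<Rightarrow> ('a \<Rightarrow> 'a) \<Rightarrow> ('a \<Rightarrow> 'a) \<Rightarrow> bool" where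
  "cay_adj T x y \<longleftrightarrow> (\<exists>t\<in>T. y = t \<circ> x \<or> x = t \<circ> y)"

definition cay_aut_fix_e ::
  "('a \<Rightarrow> 'a) set \<Rightarrow> ('a \<Rightarrow> 'a) set \<Rightarrow> (('a \<Rightarrow> 'a) \<Rightarrow> ('a \<Rightarrow> 'a)) set" where
  "cay_aut_fix_e Gamma T = {g. bij_betw g Gamma Gamma
      \<and> (\<forall>x\<in>Gamma. \<forall>y\<in>Gamma. cay_adj T x y \<longleftrightarrow> cay_adj T (g x) (g y))
      \<and> g id = id}"

end

theory Submission
  imports Defs
begin

abbreviation tc where "tc \<equiv> three_cycle"

lemma X:
  fixes a b c p q r u v w u' v' w' :: nat
  assumes d: "distinct [a,b,c]" "distinct [p,q,r]" "distinct [u,v,w]" "distinct [u',v',w']"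
  and h1: "\<And>x. three_cycle p q r x = three_cycle u v w (three_cycle a b c x)"
  and h2: "\<And>x. three_cycle p q r x = three_cycle u' v' w' (three_cycle c b a x)"
  shows False
proof -
  have H: "\<forall>x\<in>{a,b,c,p,q,r,u,v,w,u',v',w'}. three_cycle p q r x = three_cycle u v w (three_cycle a b c x) \<and> three_cycle p q r x = three_cycle u' v' w' (three_cycle c b a x)"
    using h1 h2 by blast
  show False using d H unfolding three_cycle_def by (simp only: ball_simps distinct.simps list.set insert_iff empty_iff) (smt (z3))
qed

lemma C:
  fixes a b c p q r u v w :: nat
  assumes d: "distinct [a,b,c]" "distinct [p,q,r]" "distinct [u,v,w]"
  and h1: "\<And>x. three_cycle p q r x = three_cycle u v w (three_cycle a b c x)"
  shows "(p=c\<and>q=b\<and>r=a \<or> p=b\<and>q=a\<and>r=c \<or> p=a\<and>q=c\<and>r=b)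
    \<or> (r\<notin>{a,b,c} \<and> (p=a\<and>q=b \<or> p=b\<and>q=c \<or> p=c\<and>q=a))
    \<or> (p\<notin>{a,b,c} \<and> (q=a\<and>r=b \<or> q=b\<and>r=c \<or> q=c\<and>r=a))
    \<or> (q\<notin>{a,b,c} \<and> (r=a\<and>p=b \<or> r=b\<and>p=c \<or> r=c\<and>p=a))"
proof -
  have H: "\<forall>x\<in>{a,b,c,p,q,r,u,v,w}. three_cycle p q r x = three_cycle u v w (three_cycle a b c x)"
    using h1 by blast
  show ?thesis using d H unfolding three_cycle_def by (simp only: ball_simps distinct.simps list.set insert_iff empty_iff) (smt (z3))
qed

lemma tc_rot: "distinct [a,b,c] \<Longrightarrow> tc a b c = tc b c a"
  by (auto simp: three_cycle_def fun_eq_iff)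

lemma tc_transp: "distinct [a,b,c] \<Longrightarrow> tc a b c = transpose a b \<circ> transpose b c"
  by (auto simp: three_cycle_def fun_eq_iff transpose_def)

lemma tc_sq: "distinct [a,b,c] \<Longrightarrow> tc a b c \<circ> tc a b c = tc c b a"
  by (auto simp: three_cycle_def fun_eq_iff)

lemma tc_inv: "distinct [a,b,c] \<Longrightarrow> inv (tc a b c) = tc c b a"
  by (rule inv_unique_comp) (auto simp: three_cycle_def fun_eq_iff)

lemma tc_alt:
  assumes "distinct [a,b,c]" "a \<in> {1..n}" "b \<in> {1..n}" "c \<in> {1..n}"
  shows "tc a b c \<in> alt_grp n"
proof -
  have "transpose a b \<circ> transpose b c permutes {1..n}"
    using assms by (intro permutes_compose permutes_swap_id) auto
  moreover have "evenperm (transpose a b \<circ> transpose b c)"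
    using assms by (simp add: evenperm_comp permutation_swap_id evenperm_swap)
  ultimately show ?thesis using tc_transp[OF assms(1)] by (simp add: alt_grp_def)
qed

lemma tcs_E:
  assumes "t \<in> three_cycles n"
  obtains a b c where "t = tc a b c" "distinct [a,b,c]" "a \<in> {1..n}" "b \<in> {1..n}" "c \<in> {1..n}"
  using assms unfolding three_cycles_def by auto

lemma tcs_I:
  "distinct [a,b,c] \<Longrightarrow> a \<in> {1..n} \<Longrightarrow> b \<in> {1..n} \<Longrightarrow> c \<in> {1..n} \<Longrightarrow> tc a b c \<in> three_cycles n"
  unfolding three_cycles_def by auto

lemma tcs_alt: "t \<in> three_cycles n \<Longrightarrow> t \<in> alt_grp n"
  by (erule tcs_E) (simp add: tc_alt)

lemma tcs_inv: "t \<in> three_cycles n \<Longrightarrow> inv t \<in> three_cycles n"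
  by (erule tcs_E) (simp add: tc_inv tcs_I)

lemma tcs_bij: "t \<in> three_cycles n \<Longrightarrow> bij t"
  using tcs_alt[of t n] by (auto simp: alt_grp_def permutes_bij)

lemma adj_E:
  assumes "cay_adj (three_cycles n) x z"
  obtains s where "s \<in> three_cycles n" "z = s \<circ> x"
proof -
  from assms obtain t where t: "t \<in> three_cycles n" "z = t \<circ> x \<or> x = t \<circ> z"
    unfolding cay_adj_def by blast
  show ?thesis
  proof (cases "z = t \<circ> x")
    case True then show ?thesis using that t by blast
  next
    case False
    then have "x = t \<circ> z" using t by blast
    then have "inv t \<circ> x = z"
      using tcs_bij[OF t(1)] by (simp add: o_assoc bij_is_inj)
    then show ?thesis using that tcs_inv[OF t(1)] by metis
  qed
qed

lemma adj_I: "s \<in> three_cycles n \<Longrightarrow> z = s \<circ> x \<Longrightarrow> cay_adj (three_cycles n) x z"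
  unfolding cay_adj_def by blast

lemma K:
  assumes n: "n \<ge> 5" and dd: "distinct [a,b,c]" "a \<in> {1..n}" "b \<in> {1..n}" "c \<in> {1..n}"
    and d: "d \<in> {1..n}" "d \<notin> {a,b,c}"
  shows "\<exists>z\<in>alt_grp n. cay_adj (three_cycles n) id z \<and> cay_adj (three_cycles n) (tc a b c) z
          \<and> cay_adj (three_cycles n) (tc a b d) z"
proof -
  have "\<not> {1..5::nat} \<subseteq> {a,b,c,d}"
  proof
    assume "{1..5::nat} \<subseteq> {a,b,c,d}"
    then have "card {1..5::nat} \<le> card (set [a,b,c,d])" by (intro card_mono) auto
    also have "\<dots> \<le> 4" using card_length[of "[a,b,c,d]"] by simp
    finally show False by simp
  qed
  then have "\<exists>f\<in>{1..5::nat}. f \<notin> {a,b,c,d}" by blast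
  then obtain f where f: "f \<in> {1..n}" "f \<notin> {a,b,c,d}" using n by (metis atLeastAtMost_iff le_trans)
  let ?z = "tc a b f"
  have z: "?z \<in> three_cycles n" using f dd d by (intro tcs_I) auto
  have e1: "?z = tc a c f \<circ> tc a b c" using f dd d by (auto simp: three_cycle_def fun_eq_iff)
  have e2: "?z = tc a d f \<circ> tc a b d" using f dd d by (auto simp: three_cycle_def fun_eq_iff)
  have "tc a c f \<in> three_cycles n" "tc a d f \<in> three_cycles n"
    using f dd d by (auto intro!: tcs_I)
  then show ?thesis using z e1 e2 tcs_alt[OF z]
    by (intro bexI[of _ ?z]) (auto intro: adj_I[of ?z] adj_I)
qed

theorem lemma3p3:
  fixes n :: nat and g :: "(nat \<Rightarrow> nat) \<Rightarrow> (nat \<Rightarrow> nat)" and \<alpha> \<beta> :: "nat \<Rightarrow> nat"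
  assumes "n \<ge> 5"
    and "g \<in> cay_aut_fix_e (alt_grp n) (three_cycles n)"
    and "\<alpha> \<in> three_cycles n" and "\<beta> \<in> three_cycles n"
    and "g \<alpha> = \<beta>"
  shows "g (inv \<alpha>) = inv \<beta>"
proof (rule ccontr)
  let ?T = "three_cycles n" and ?A = "alt_grp n"
  assume ne: "g (inv \<alpha>) \<noteq> inv \<beta>"
  have gb: "bij_betw g ?A ?A" and gadj: "\<And>x y. x \<in> ?A \<Longrightarrow> y \<in> ?A \<Longrightarrow> cay_adj ?T x y \<longleftrightarrow> cay_adj ?T (g x) (g y)"
    and gid: "g id = id"
    using assms(2) unfolding cay_aut_fix_e_def by auto
  obtain a b c where al: "\<alpha> = tc a b c" "distinct [a,b,c]" "a \<in> {1..n}" "b \<in> {1..n}" "c \<in> {1..n}"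
    using assms(3) by (rule tcs_E)
  obtain a' b' c' where be: "\<beta> = tc a' b' c'" "distinct [a',b',c']" "a' \<in> {1..n}" "b' \<in> {1..n}" "c' \<in> {1..n}"
    using assms(4) by (rule tcs_E)
  have idA: "id \<in> ?A" by (simp add: alt_grp_def)
  have aA: "\<alpha> \<in> ?A" using assms(3) by (rule tcs_alt)
  have iaT: "inv \<alpha> \<in> ?T" using assms(3) by (rule tcs_inv)
  have iaA: "inv \<alpha> \<in> ?A" using iaT by (rule tcs_alt)
  have ia: "inv \<alpha> = tc c b a" using al by (simp add: tc_inv)
  have "cay_adj ?T id (inv \<alpha>)" using iaT by (intro adj_I) auto
  then have a1: "cay_adj ?T id (g (inv \<alpha>))" using gadj[OF idA iaA] gid by simp
  have "cay_adj ?T \<alpha> (inv \<alpha>)" using assms(3) al ia by (intro adj_I[of \<alpha>]) (auto simp: tc_sq)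
  then have a2: "cay_adj ?T \<beta> (g (inv \<alpha>))" using gadj[OF aA iaA] assms(5) by simp
  from a1 obtain s0 where s0: "s0 \<in> ?T" "g (inv \<alpha>) = s0" by (rule adj_E) simp
  obtain p q r where y: "s0 = tc p q r" "distinct [p,q,r]" "p \<in> {1..n}" "q \<in> {1..n}" "r \<in> {1..n}"
    using s0(1) by (rule tcs_E)
  from a2 obtain s1 where s1: "s1 \<in> ?T" "g (inv \<alpha>) = s1 \<circ> \<beta>" by (rule adj_E)
  obtain u v w where s1': "s1 = tc u v w" "distinct [u,v,w]"
    using s1(1) by (rule tcs_E)
  have eq: "\<And>x. tc p q r x = tc u v w (tc a' b' c' x)"
    using s0 s1 s1' y be by (metis comp_apply)
  have ib: "inv \<beta> = tc c' b' a'" using be by (simp add: tc_inv)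
  have "\<exists>z\<in>?A. cay_adj ?T id z \<and> cay_adj ?T \<beta> z \<and> cay_adj ?T (g (inv \<alpha>)) z"
  proof -
    have d2: "distinct [b',c',a']" using be(2) by auto
    have rot1: "tc a' b' c' = tc b' c' a'" "tc a' b' c' = tc c' a' b'"
      using tc_rot[OF be(2)] tc_rot[OF d2] by auto
    have gy: "g (inv \<alpha>) = tc p q r" using s0 y by simp
    have d3: "distinct [q,r,p]" using y(2) by auto
    have rq: "tc p q r = tc q r p" "tc p q r = tc r p q"
      using tc_rot[OF y(2)] tc_rot[OF d3] by auto
    from C[OF be(2) y(2) s1'(2) eq] show ?thesis
    proof (elim disjE conjE)
      assume "p = c'" "q = b'" "r = a'" then show ?thesis using ne ib gy by simp
    next
      assume "p = b'" "q = a'" "r = c'" then show ?thesis using ne ib gy rq rot1 by simp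
    next
      assume "p = a'" "q = c'" "r = b'" then show ?thesis using ne ib gy rq rot1 by simp
    next
      assume "r \<notin> {a',b',c'}" "p = a'" "q = b'"
      then show ?thesis using K[OF assms(1) be(2-5), of r] y gy be(1) by auto
    next
      assume "r \<notin> {a',b',c'}" "p = b'" "q = c'"
      then show ?thesis using K[of n b' c' a' r] assms(1) y gy be rot1 by auto
    next
      assume "r \<notin> {a',b',c'}" "p = c'" "q = a'"
      then show ?thesis using K[of n c' a' b' r] assms(1) y gy be rot1 by auto
    next
      assume "p \<notin> {a',b',c'}" "q = a'" "r = b'"
      then show ?thesis using K[OF assms(1) be(2-5), of p] y gy be(1) rq by auto
    next
      assume "p \<notin> {a',b',c'}" "q = b'" "r = c'"
      then show ?thesis using K[of n b' c' a' p] assms(1) y gy be rot1 rq by auto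
    next
      assume "p \<notin> {a',b',c'}" "q = c'" "r = a'"
      then show ?thesis using K[of n c' a' b' p] assms(1) y gy be rot1 rq by auto
    next
      assume "q \<notin> {a',b',c'}" "r = a'" "p = b'"
      then show ?thesis using K[OF assms(1) be(2-5), of q] y gy be(1) rq by auto
    next
      assume "q \<notin> {a',b',c'}" "r = b'" "p = c'"
      then show ?thesis using K[of n b' c' a' q] assms(1) y gy be rot1 rq by auto
    next
      assume "q \<notin> {a',b',c'}" "r = c'" "p = a'"
      then show ?thesis using K[of n c' a' b' q] assms(1) y gy be rot1 rq by auto
    qed
  qed
  then obtain z where z: "z \<in> ?A" "cay_adj ?T id z" "cay_adj ?T \<beta> z" "cay_adj ?T (g (inv \<alpha>)) z"
    by blast
  from z(1) gb obtain z' where z': "z' \<in> ?A" "g z' = z"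
    by (metis bij_betw_iff_bijections)
  have b1: "cay_adj ?T id z'" using gadj[OF idA z'(1)] gid z' z by simp
  have b2: "cay_adj ?T \<alpha> z'" using gadj[OF aA z'(1)] assms(5) z' z by simp
  have b3: "cay_adj ?T (inv \<alpha>) z'" using gadj[OF iaA z'(1)] z' z by simp
  from b1 obtain t0 where t0: "t0 \<in> ?T" "z' = t0" by (rule adj_E) simp
  from b2 obtain t1 where t1: "t1 \<in> ?T" "z' = t1 \<circ> \<alpha>" by (rule adj_E)
  from b3 obtain t2 where t2: "t2 \<in> ?T" "z' = t2 \<circ> inv \<alpha>" by (rule adj_E)
  obtain p q r where P: "t0 = tc p q r" "distinct [p,q,r]" using t0(1) by (rule tcs_E)
  obtain u v w where U: "t1 = tc u v w" "distinct [u,v,w]" using t1(1) by (rule tcs_E)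
  obtain u' v' w' where U': "t2 = tc u' v' w'" "distinct [u',v',w']" using t2(1) by (rule tcs_E)
  show False
  proof (rule X[OF al(2) P(2) U(2) U'(2)])
    fix x
    show "tc p q r x = tc u v w (tc a b c x)" using t0 t1 P U al by (metis comp_apply)
    show "tc p q r x = tc u' v' w' (tc c b a x)" using t0 t2 P U' ia by (metis comp_apply)
  qed
qed

end
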